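(* Let $(\mathcal{X},\mathcal{B},\lambda)$ be a measure space with $\lambda$ positive and $\sigma$-finite, and let $P$ be a probability measure on $(\mathcal{X},\mathcal{B})$ with density $f$ with respect to $\lambda$, with $f\in\mathcal{L}^2(\mathcal{X},\lambda)$. Let $X_1,\dots,X_N$ be i.i.d. with law $P$, with joint law $P^{\otimes N}$. Let $m\ge 1$ and $f_1,\dots,f_m\in\mathcal{L}^2(\mathcal{X},\lambda)$ with $D_k=\int_{\mathcal{X}} f_k^2\,d\lambda>0$. Assume that condition $\mathcal{H}(p)$ (defined in the context) holds for some $p\in[1,+\infty]$, with constants $C_k$. Then for every $\varepsilon>0$, $$P^{\otimes N}\left\{\forall k\in\{1,\dots,m\},\ d^2(\hat\alpha_k f_k,\overline{\alpha}_k f_k)\le \frac{4\left[1+\log\frac{2m}{\varepsilon}\right]}{N}\left[\frac{\frac1N\sum_{i=1}^N f_k(X_i)^2}{D_k}+C_k\right]\right\}\ge 1-\varepsilon.$$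
   Context: $\mathcal{L}^2=\mathcal{L}^2(\mathcal{X},\lambda)$; for $g,h\in\mathcal{L}^2$, $d^2(g,h)=\int_{\mathcal{X}}(g(x)-h(x))^2\lambda(dx)$. For each $k$, $\overline{\alpha}_k=\arg\min_{\alpha\in\mathbb{R}}d^2(\alpha f_k,f)=\frac{\int f_k f\,d\lambda}{D_k}$ and $\hat\alpha_k=\frac{\frac1N\sum_{i=1}^N f_k(X_i)}{D_k}$. Condition $\mathcal{H}(p)$: for $1<p<\infty$ with $\frac1p+\frac1q=1$, there are known constants $c,c_1,\dots,c_m>0$ such that for all $k$, $\left(\int|f_k|^{2p}d\lambda\right)^{1/p}\le c_k\int|f_k|^2d\lambda$, and $\left(\int|f|^q d\lambda\right)^{1/q}\le c\int|f|\,d\lambda\ (=c)$. For $p=1$: $f\le c$ everywhere for a known constant $c$, and $c_1=\dots=c_m=1$. For $p=+\infty$: each $|f_k|$ is bounded by $\sqrt{c_k\int f_k^2d\lambda}$ for known $c_k$, and $c=1$. In all cases $C_k=c_kc$. *)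

theory Defs
  imports "HOL-Probability.Probability"
begin

definition d2 :: "'a measure \<Rightarrow> ('a \<Rightarrow> real) \<Rightarrow> ('a \<Rightarrow> real) \<Rightarrow> real" where
  "d2 M g h = (\<integral>x. (g x - h x)\<^sup>2 \<partial>M)"

definition sqnorm :: "'a measure \<Rightarrow> ('a \<Rightarrow> real) \<Rightarrow> real" where
  "sqnorm M g = (\<integral>x. (g x)\<^sup>2 \<partial>M)"

definition alpha_bar :: "'a measure \<Rightarrow> ('a \<Rightarrow> real) \<Rightarrow> ('a \<Rightarrow> real) \<Rightarrow> real" where
  "alpha_bar M f g = (\<integral>x. g x * f x \<partial>M) / sqnorm M g"

definition alpha_hat :: "'a measure \<Rightarrow> ('a \<Rightarrow> real) \<Rightarrow> nat \<Rightarrow> (nat \<Rightarrow> 'a) \<Rightarrow> real" where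
  "alpha_hat M g N X = ((\<Sum>i<N. g (X i)) / real N) / sqnorm M g"

definition cond_H :: "'a measure \<Rightarrow> ('a \<Rightarrow> real) \<Rightarrow> (nat \<Rightarrow> 'a \<Rightarrow> real) \<Rightarrow> nat
    \<Rightarrow> ereal \<Rightarrow> real \<Rightarrow> (nat \<Rightarrow> real) \<Rightarrow> bool" where
  "cond_H M f fs m p c cs \<longleftrightarrow> c > 0 \<and> (\<forall>k\<in>{1..m}. cs k > 0) \<and>
   ((p = 1 \<and> (\<forall>x\<in>space M. f x \<le> c) \<and> (\<forall>k\<in>{1..m}. cs k = 1)) \<or>
    (p = \<infinity> \<and> c = 1 \<and>
       (\<forall>k\<in>{1..m}. \<forall>x\<in>space M. \<bar>fs k x\<bar> \<le> sqrt (cs k * sqnorm M (fs k)))) \<or>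
    (\<exists>r::real. p = ereal r \<and> 1 < r \<and>
       (\<forall>k\<in>{1..m}. integrable M (\<lambda>x. \<bar>fs k x\<bar> powr (2 * r)) \<and>
          (\<integral>x. \<bar>fs k x\<bar> powr (2 * r) \<partial>M) powr (1 / r) \<le> cs k * sqnorm M (fs k)) \<and>
       integrable M (\<lambda>x. \<bar>f x\<bar> powr (r / (r - 1))) \<and>
       (\<integral>x. \<bar>f x\<bar> powr (r / (r - 1)) \<partial>M) powr (1 / (r / (r - 1)))
          \<le> c * (\<integral>x. \<bar>f x\<bar> \<partial>M)))"

end

theory Submission
  imports Defs
begin

lemma exp_quad_bound:
  fixes x :: real
  shows "exp (x - x\<^sup>2/2) \<le> 1 + x + x\<^sup>2/2"
proof -
  define h where "h = (\<lambda>t::real. (1 + t + t\<^sup>2/2) * exp (t\<^sup>2/2 - t))"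
  have d: "(h has_real_derivative (t * (1 + t/2 + t\<^sup>2/2) * exp (t\<^sup>2/2 - t))) (at t)" for t
    unfolding h_def
    apply (rule derivative_eq_intros refl | simp)+
    apply (simp add: field_simps power2_eq_square)
    done
  have cont: "continuous_on S h" for S
    using d by (meson DERIV_isCont continuous_at_imp_continuous_on)
  have pos: "0 < 1 + t/2 + t\<^sup>2/2" for t :: real
  proof -
    have e: "1 + t/2 + t\<^sup>2/2 = ((t+1/2)\<^sup>2 + 7/4)/2" by (simp add: power2_eq_square field_simps)
    show ?thesis unfolding e by (simp add: add_nonneg_pos)
  qed
  have "h 0 \<le> h x"
  proof (cases "0 \<le> x")
    case True
    show ?thesis
      apply (rule DERIV_nonneg_imp_increasing_open[OF True _ cont])
      using d pos by (metis less_eq_real_def mult_nonneg_nonneg exp_ge_zero)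
  next
    case False
    show ?thesis
      apply (rule DERIV_nonpos_imp_decreasing_open[of x 0, OF _ _ cont])
      using False apply simp
      using d pos by (metis less_eq_real_def mult_nonneg_nonneg exp_ge_zero mult_nonpos_nonneg)
  qed
  hence "1 \<le> (1 + x + x\<^sup>2/2) * exp (x\<^sup>2/2 - x)" by (simp add: h_def)
  hence "exp (x - x\<^sup>2/2) \<le> (1 + x + x\<^sup>2/2) * exp (x\<^sup>2/2 - x) * exp (x - x\<^sup>2/2)"
    by simp
  also have "\<dots> = 1 + x + x\<^sup>2/2" by (simp add: mult.assoc flip: exp_add)
  finally show ?thesis .
qed

lemma one_step:
  fixes Y :: "'a \<Rightarrow> real"
  assumes P: "prob_space P" and Ym[measurable]: "Y \<in> borel_measurable P"
    and iY: "integrable P Y" and iY2: "integrable P (\<lambda>x. (Y x)\<^sup>2)"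
    and v: "(\<integral>x. (Y x)\<^sup>2 \<partial>P) \<le> s2" and mu: "\<mu> = (\<integral>x. Y x \<partial>P)"
  shows "(\<integral>\<^sup>+x. ennreal (exp (l * (Y x - \<mu>) - l\<^sup>2 * ((Y x)\<^sup>2 + s2) / 2)) \<partial>P) \<le> 1"
proof -
  interpret prob_space P by fact
  define K where "K = exp (- l * \<mu> - l\<^sup>2 * s2 / 2)"
  have Kpos: "0 < K" by (simp add: K_def)
  have pw: "exp (l * (Y x - \<mu>) - l\<^sup>2 * ((Y x)\<^sup>2 + s2) / 2) \<le> K * (1 + l * Y x + l\<^sup>2 * (Y x)\<^sup>2 / 2)" for x
  proof -
    have "exp (l * (Y x - \<mu>) - l\<^sup>2 * ((Y x)\<^sup>2 + s2) / 2) = K * exp (l * Y x - (l * Y x)\<^sup>2 / 2)"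
      by (simp add: K_def flip: exp_add) (simp add: algebra_simps power2_eq_square)
    also have "\<dots> \<le> K * (1 + l * Y x + (l * Y x)\<^sup>2 / 2)"
      using exp_quad_bound[of "l * Y x"] Kpos by simp
    finally show ?thesis by (simp add: power_mult_distrib)
  qed
  have nn: "0 \<le> 1 + t + t\<^sup>2/2" for t :: real
  proof -
    have e: "1 + t + t\<^sup>2/2 = ((t+1)\<^sup>2 + 1)/2" by (simp add: power2_eq_square field_simps)
    show ?thesis unfolding e by simp
  qed
  have nn2: "0 \<le> K * (1 + l * Y x + l\<^sup>2 * (Y x)\<^sup>2 / 2)" for x
    using nn[of "l * Y x"] Kpos by (simp add: power_mult_distrib)
  have int: "integrable P (\<lambda>x. K * (1 + l * Y x + l\<^sup>2 * (Y x)\<^sup>2 / 2))"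
    using iY iY2 by (intro integrable_mult_right Bochner_Integration.integrable_add integrable_const) auto
  have R: "(\<integral>x. K * (1 + l * Y x + l\<^sup>2 * (Y x)\<^sup>2 / 2) \<partial>P) \<le> 1"
  proof -
    have "(\<integral>x. K * (1 + l * Y x + l\<^sup>2 * (Y x)\<^sup>2 / 2) \<partial>P)
      = K * (1 + l * \<mu> + l\<^sup>2 * (\<integral>x. (Y x)\<^sup>2 \<partial>P) / 2)"
      using iY iY2 by (simp add: mu prob_space)
    also have "\<dots> \<le> K * (1 + (l * \<mu> + l\<^sup>2 * s2 / 2))"
      using v Kpos by (intro mult_left_mono) (auto intro: mult_left_mono)
    also have "\<dots> \<le> K * exp (l * \<mu> + l\<^sup>2 * s2 / 2)"
      using Kpos exp_ge_add_one_self by (intro mult_left_mono) auto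
    also have "\<dots> = 1" by (simp add: K_def flip: exp_add)
    finally show ?thesis .
  qed
  have "(\<integral>\<^sup>+x. ennreal (exp (l * (Y x - \<mu>) - l\<^sup>2 * ((Y x)\<^sup>2 + s2) / 2)) \<partial>P)
      \<le> (\<integral>\<^sup>+x. ennreal (K * (1 + l * Y x + l\<^sup>2 * (Y x)\<^sup>2 / 2)) \<partial>P)"
    by (intro nn_integral_mono ennreal_leI pw)
  also have "\<dots> = ennreal (\<integral>x. K * (1 + l * Y x + l\<^sup>2 * (Y x)\<^sup>2 / 2) \<partial>P)"
    by (rule nn_integral_eq_integral[OF int]) (simp add: nn2)
  also have "\<dots> \<le> 1" using R by simp
  finally show ?thesis .
qed

lemma prod_step:
  fixes Y :: "'a \<Rightarrow> real" and N :: nat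
  assumes P: "prob_space P" and Ym[measurable]: "Y \<in> borel_measurable P"
    and iY: "integrable P Y" and iY2: "integrable P (\<lambda>x. (Y x)\<^sup>2)"
    and v: "(\<integral>x. (Y x)\<^sup>2 \<partial>P) \<le> s2" and mu: "\<mu> = (\<integral>x. Y x \<partial>P)"
  shows "(\<integral>\<^sup>+X. ennreal (exp (l * (\<Sum>i<N. (Y (X i) - \<mu>)) - l\<^sup>2 * (\<Sum>i<N. ((Y (X i))\<^sup>2 + s2)) / 2))
     \<partial>PiM {..<N} (\<lambda>_. P)) \<le> 1"
proof -
  interpret PP: product_prob_space "\<lambda>_. P" "{..<N}"
    by (simp add: product_prob_space_def product_prob_space_axioms_def product_sigma_finite_def
        prob_space_imp_sigma_finite P)
  define g where "g = (\<lambda>y. l * (Y y - \<mu>) - l\<^sup>2 * ((Y y)\<^sup>2 + s2) / 2)"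
  have gm[measurable]: "g \<in> borel_measurable P" unfolding g_def by measurable
  have eq: "ennreal (exp (l * (\<Sum>i<N. (Y (X i) - \<mu>)) - l\<^sup>2 * (\<Sum>i<N. ((Y (X i))\<^sup>2 + s2)) / 2))
      = (\<Prod>i<N. ennreal (exp (g (X i))))" for X
  proof -
    have "l * (\<Sum>i<N. (Y (X i) - \<mu>)) - l\<^sup>2 * (\<Sum>i<N. ((Y (X i))\<^sup>2 + s2)) / 2 = (\<Sum>i<N. g (X i))"
      by (simp add: g_def sum_subtractf sum_distrib_left sum_divide_distrib right_diff_distrib)
    moreover have "exp (\<Sum>i<N. g (X i)) = (\<Prod>i<N. exp (g (X i)))"
      by (rule exp_sum) simp
    moreover have "ennreal (\<Prod>i<N. exp (g (X i))) = (\<Prod>i<N. ennreal (exp (g (X i))))"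
      by (rule prod_ennreal[symmetric]) simp
    ultimately show ?thesis by simp
  qed
  have "(\<integral>\<^sup>+X. ennreal (exp (l * (\<Sum>i<N. (Y (X i) - \<mu>)) - l\<^sup>2 * (\<Sum>i<N. ((Y (X i))\<^sup>2 + s2)) / 2))
     \<partial>PiM {..<N} (\<lambda>_. P)) = (\<integral>\<^sup>+X. (\<Prod>i<N. ennreal (exp (g (X i)))) \<partial>PiM {..<N} (\<lambda>_. P))"
    by (simp add: eq)
  also have "\<dots> = (\<Prod>i<N. (\<integral>\<^sup>+y. ennreal (exp (g y)) \<partial>P))"
    by (rule PP.product_nn_integral_prod) auto
  also have "\<dots> \<le> 1"
    using one_step[OF P Ym iY iY2 v mu, of l] by (intro prod_le_1) (simp add: g_def)
  finally show ?thesis .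
qed

lemma nd_one: "0 < s \<Longrightarrow> (\<integral>\<^sup>+x. ennreal (normal_density m s x) \<partial>lborel) = 1"
  by (subst nn_integral_eq_integral) (auto simp: normal_density_nonneg)

lemma gauss_mix:
  fixes S A c :: real assumes c: "0 < c" and A: "0 \<le> A"
  shows "(\<integral>\<^sup>+l. ennreal (normal_density 0 (1/c) l * exp (l * S - l\<^sup>2 * A / 2)) \<partial>lborel)
    = ennreal (c / sqrt (A + c\<^sup>2) * exp (S\<^sup>2 / (2 * (A + c\<^sup>2))))"
proof -
  define B where "B = A + c\<^sup>2"
  have B: "0 < B" using c A by (simp add: B_def add_nonneg_pos)
  define K where "K = c / sqrt B * exp (S\<^sup>2 / (2 * B))"
  have K: "0 \<le> K" using B c by (simp add: K_def)
  have e1: "normal_density 0 (1/c) l = c / sqrt (2*pi) * exp (-(l\<^sup>2*c\<^sup>2)/2)" for l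
  proof -
    have "sqrt (2 * pi * (1/c)\<^sup>2) = sqrt (2*pi) / c"
      using c by (simp add: real_sqrt_mult power_divide real_sqrt_divide)
    then show ?thesis using c unfolding normal_density_def by (simp add: power_divide field_simps)
  qed
  have e2: "normal_density (S/B) (1/sqrt B) l = sqrt B / sqrt (2*pi) * exp (-((l - S/B)\<^sup>2*B)/2)" for l
  proof -
    have "sqrt (2 * pi * (1/sqrt B)\<^sup>2) = sqrt (2*pi) / sqrt B"
      using B by (simp add: real_sqrt_mult power_divide real_sqrt_divide)
    then show ?thesis using B unfolding normal_density_def by (simp add: power_divide field_simps)
  qed
  have pw: "normal_density 0 (1/c) l * exp (l * S - l\<^sup>2 * A / 2) = K * normal_density (S/B) (1/sqrt B) l" for l
  proof -
    have ex: "-(l\<^sup>2*c\<^sup>2)/2 + (l * S - l\<^sup>2 * A / 2) = S\<^sup>2 / (2 * B) + (-((l - S/B)\<^sup>2*B)/2)"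
    proof -
      have h1: "(l - S/B)\<^sup>2*B = l\<^sup>2*B - 2*(l*S) + S\<^sup>2/B"
        using B by (simp add: power2_eq_square field_simps)
      have h2: "l\<^sup>2*B = l\<^sup>2*c\<^sup>2 + l\<^sup>2*A" by (simp add: B_def algebra_simps)
      show ?thesis unfolding h1 using h2 by (simp add: diff_divide_distrib add_divide_distrib)
    qed
    have "normal_density 0 (1/c) l * exp (l * S - l\<^sup>2 * A / 2) = c / sqrt (2*pi) * exp (-(l\<^sup>2*c\<^sup>2)/2 + (l * S - l\<^sup>2 * A / 2))"
      by (simp only: e1 exp_add mult.assoc)
    also have "\<dots> = c / sqrt (2*pi) * (exp (S\<^sup>2 / (2 * B)) * exp (-((l - S/B)\<^sup>2*B)/2))"
      by (simp only: ex exp_add)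
    also have "\<dots> = K * normal_density (S/B) (1/sqrt B) l"
      using B by (simp add: e2 K_def)
    finally show ?thesis .
  qed
  have "(\<integral>\<^sup>+l. ennreal (normal_density 0 (1/c) l * exp (l * S - l\<^sup>2 * A / 2)) \<partial>lborel)
      = (\<integral>\<^sup>+l. ennreal K * ennreal (normal_density (S/B) (1/sqrt B) l) \<partial>lborel)"
    by (simp add: pw ennreal_mult K normal_density_nonneg)
  also have "\<dots> = ennreal K * (\<integral>\<^sup>+l. ennreal (normal_density (S/B) (1/sqrt B) l) \<partial>lborel)"
    by (rule nn_integral_cmult) simp
  also have "\<dots> = ennreal K" using B by (simp add: nd_one)
  finally show ?thesis by (simp add: K_def B_def)
qed

lemma mix_bound:
  fixes Y :: "'a \<Rightarrow> real" and N :: nat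
  assumes P: "prob_space P" and Ym[measurable]: "Y \<in> borel_measurable P"
    and iY: "integrable P Y" and iY2: "integrable P (\<lambda>x. (Y x)\<^sup>2)"
    and v: "(\<integral>x. (Y x)\<^sup>2 \<partial>P) \<le> s2" and mu: "\<mu> = (\<integral>x. Y x \<partial>P)"
    and c: "0 < c" and s2: "0 \<le> s2"
  shows "(\<integral>\<^sup>+X. ennreal (c / sqrt ((\<Sum>i<N. ((Y (X i))\<^sup>2 + s2)) + c\<^sup>2)
       * exp ((\<Sum>i<N. (Y (X i) - \<mu>))\<^sup>2 / (2 * ((\<Sum>i<N. ((Y (X i))\<^sup>2 + s2)) + c\<^sup>2))))
     \<partial>PiM {..<N} (\<lambda>_. P)) \<le> 1"
proof -
  let ?PN = "PiM {..<N} (\<lambda>_. P)"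
  interpret PN: prob_space ?PN by (intro prob_space_PiM P)
  interpret PS: pair_sigma_finite lborel ?PN
    by (simp add: pair_sigma_finite_def lborel.sigma_finite_measure_axioms PN.sigma_finite_measure_axioms)
  define f where "f = (\<lambda>l X. ennreal (normal_density 0 (1/c) l *
      exp (l * (\<Sum>i<N. (Y (X i) - \<mu>)) - l\<^sup>2 * (\<Sum>i<N. ((Y (X i))\<^sup>2 + s2)) / 2)))"
  have fm: "case_prod f \<in> borel_measurable (lborel \<Otimes>\<^sub>M ?PN)"
    unfolding f_def by measurable
  have Anneg: "0 \<le> (\<Sum>i<N. ((Y (X i))\<^sup>2 + s2))" for X
    using s2 by (intro sum_nonneg) simp
  have "(\<integral>\<^sup>+X. ennreal (c / sqrt ((\<Sum>i<N. ((Y (X i))\<^sup>2 + s2)) + c\<^sup>2)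
       * exp ((\<Sum>i<N. (Y (X i) - \<mu>))\<^sup>2 / (2 * ((\<Sum>i<N. ((Y (X i))\<^sup>2 + s2)) + c\<^sup>2)))) \<partial>?PN)
     = (\<integral>\<^sup>+X. (\<integral>\<^sup>+l. f l X \<partial>lborel) \<partial>?PN)"
    unfolding f_def by (simp add: gauss_mix[OF c Anneg])
  also have "\<dots> = (\<integral>\<^sup>+l. (\<integral>\<^sup>+X. f l X \<partial>?PN) \<partial>lborel)"
    by (rule PS.Fubini'[OF fm])
  also have "\<dots> = (\<integral>\<^sup>+l. ennreal (normal_density 0 (1/c) l) * (\<integral>\<^sup>+X. ennreal (
      exp (l * (\<Sum>i<N. (Y (X i) - \<mu>)) - l\<^sup>2 * (\<Sum>i<N. ((Y (X i))\<^sup>2 + s2)) / 2)) \<partial>?PN) \<partial>lborel)"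
    unfolding f_def
    by (intro nn_integral_cong, subst nn_integral_cmult[symmetric])
       (auto simp: ennreal_mult normal_density_nonneg)
  also have "\<dots> \<le> (\<integral>\<^sup>+l. ennreal (normal_density 0 (1/c) l) * 1 \<partial>lborel)"
    by (intro nn_integral_mono mult_left_mono prod_step[OF P Ym iY iY2 v mu]) auto
  also have "\<dots> = 1" using c by (simp add: nd_one)
  finally show ?thesis .
qed

lemma pw_real:
  fixes S A c2 \<delta> :: real
  assumes c2: "0 < c2" and d: "0 < \<delta>" "\<delta> < 1" and A: "3 * c2 \<le> A"
    and G: "S\<^sup>2 > 4 * (1 + ln (1/\<delta>)) * A"
  shows "1 \<le> sqrt (1 + 8/\<delta>) / exp (3/2 * (1 + ln (1/\<delta>))) *
     (sqrt c2 / sqrt (A + c2) * exp (S\<^sup>2 / (2 * (A + c2)))) + (\<delta>/8) / c2 * A"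
proof -
  define L where "L = 1 + ln (1/\<delta>)"
  have "ln \<delta> < 0" using d by simp
  moreover have "ln (1/\<delta>) = - ln \<delta>" using d by (simp add: ln_div)
  ultimately have L: "0 < L" unfolding L_def by linarith
  have Apos: "0 < A" using A c2 by linarith
  have "0 < 8/\<delta>" using d by simp
  hence p8: "0 < 1 + 8/\<delta>" by linarith
  have t1: "0 \<le> sqrt (1 + 8/\<delta>) / exp (3/2 * L) * (sqrt c2 / sqrt (A + c2) * exp (S\<^sup>2 / (2 * (A + c2))))"
    using d c2 Apos by (intro mult_nonneg_nonneg divide_nonneg_nonneg) auto
  show ?thesis
  proof (cases "8 * c2 / \<delta> \<le> A")
    case True
    have "1 \<le> (\<delta>/8) / c2 * A"
      using True d c2 by (simp add: field_simps)
    then show ?thesis using t1 unfolding L_def by linarith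
  next
    case False
    have e1: "3/2 * L \<le> S\<^sup>2 / (2 * (A + c2))"
    proof -
      have "3 * L * (A + c2) \<le> 4 * L * A" using A L by (simp add: algebra_simps)
      also have "\<dots> \<le> S\<^sup>2" using G by (simp add: L_def)
      finally show ?thesis using Apos c2 by (simp add: field_simps)
    qed
    have e2: "1 / sqrt (1 + 8/\<delta>) \<le> sqrt c2 / sqrt (A + c2)"
    proof -
      have "sqrt (A + c2) \<le> sqrt (c2 * (1 + 8/\<delta>))"
        using False d c2 by (intro real_sqrt_le_mono) (simp add: field_simps)
      also have "\<dots> = sqrt c2 * sqrt (1 + 8/\<delta>)" by (simp add: real_sqrt_mult)
      finally have "sqrt (A + c2) \<le> sqrt c2 * sqrt (1 + 8/\<delta>)" .
      moreover have "0 < sqrt (1 + 8/\<delta>)" "0 < sqrt (A + c2)" using p8 c2 Apos by auto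
      ultimately show ?thesis by (simp add: field_simps)
    qed
    have pos: "0 < sqrt (1 + 8/\<delta>)" using p8 by auto
    have "1 = sqrt (1 + 8/\<delta>) / exp (3/2 * L) * (1 / sqrt (1 + 8/\<delta>) * exp (3/2 * L))"
      using pos by simp
    also have "\<dots> \<le> sqrt (1 + 8/\<delta>) / exp (3/2 * L) * (sqrt c2 / sqrt (A + c2) * exp (S\<^sup>2 / (2 * (A + c2))))"
      using e1 e2 pos c2 Apos by (intro mult_left_mono mult_mono) auto
    finally have "1 \<le> \<dots>" .
    moreover have "0 \<le> (\<delta>/8) / c2 * A" using d c2 Apos by simp
    ultimately show ?thesis unfolding L_def by linarith
  qed
qed

lemma const_real:
  fixes \<delta> :: real
  assumes d: "0 < \<delta>" "\<delta> < 1"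
  shows "sqrt (1 + 8/\<delta>) / exp (3/2 * (1 + ln (1/\<delta>))) + 6 * (\<delta>/8) \<le> 2 * \<delta>"
proof -
  have sq: "exp (1/2 * ln (1/\<delta>)) = sqrt (1/\<delta>)"
    using d by (simp add: powr_half_sqrt[symmetric] powr_def)
  have "exp (3/2 * (1 + ln (1/\<delta>))) = exp (3/2) * exp (ln (1/\<delta>)) * exp (1/2 * ln (1/\<delta>))"
    by (simp flip: exp_add add: algebra_simps)
  also have "\<dots> = exp (3/2) * (1/\<delta>) * sqrt (1/\<delta>)" using d sq by simp
  finally have E: "exp (3/2 * (1 + ln (1/\<delta>))) = exp (3/2) * (1/\<delta>) * sqrt (1/\<delta>)" .
  have s1: "sqrt (1 + 8/\<delta>) \<le> 3 * sqrt (1/\<delta>)"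
  proof -
    have "sqrt (1 + 8/\<delta>) \<le> sqrt (9 * (1/\<delta>))"
      using d by (intro real_sqrt_le_mono) (simp add: field_simps)
    also have "\<dots> = sqrt 9 * sqrt (1/\<delta>)" by (rule real_sqrt_mult)
    also have "sqrt (9::real) = 3" using real_sqrt_abs[of "3::real"] by simp
    finally have "sqrt (1 + 8/\<delta>) \<le> 3 * sqrt (1/\<delta>)" .
    then show ?thesis .
  qed
  have ex: "5/2 \<le> exp (3/2::real)" using exp_ge_add_one_self[of "3/2"] by simp
  have sp: "0 < sqrt (1/\<delta>)" using d by simp
  have "sqrt (1 + 8/\<delta>) / exp (3/2 * (1 + ln (1/\<delta>))) \<le> 3 * sqrt (1/\<delta>) / (exp (3/2) * (1/\<delta>) * sqrt (1/\<delta>))"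
    unfolding E using s1 d sp by (intro divide_right_mono) auto
  also have "\<dots> = 3 * \<delta> / exp (3/2)" using sp d by (simp add: field_simps)
  also have "\<dots> \<le> 3 * \<delta> / (5/2)" using ex d by (intro divide_left_mono) auto
  finally show ?thesis using d by simp
qed

lemma EA:
  fixes Y :: "'a \<Rightarrow> real" and N :: nat
  assumes P: "prob_space P" and Ym[measurable]: "Y \<in> borel_measurable P"
    and iY2: "integrable P (\<lambda>x. (Y x)\<^sup>2)"
    and v: "(\<integral>x. (Y x)\<^sup>2 \<partial>P) \<le> s2" and s2: "0 \<le> s2"
  shows "(\<integral>\<^sup>+X. ennreal (\<Sum>i<N. ((Y (X i))\<^sup>2 + s2)) \<partial>PiM {..<N} (\<lambda>_. P)) \<le> ennreal (real N * (2 * s2))"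
proof -
  let ?PN = "PiM {..<N} (\<lambda>_. P)"
  interpret prob_space P by fact
  have one: "(\<integral>\<^sup>+X. ennreal ((Y (X i))\<^sup>2 + s2) \<partial>?PN) \<le> ennreal (2 * s2)" if i: "i < N" for i
  proof -
    have "(\<integral>\<^sup>+X. ennreal ((Y (X i))\<^sup>2 + s2) \<partial>?PN) = (\<integral>\<^sup>+y. ennreal ((Y y)\<^sup>2 + s2) \<partial>distr ?PN P (\<lambda>\<omega>. \<omega> i))"
      using i by (subst nn_integral_distr) (auto intro: measurable_component_singleton)
    also have "distr ?PN P (\<lambda>\<omega>. \<omega> i) = P"
      using i P by (intro distr_PiM_component) auto
    also have "(\<integral>\<^sup>+y. ennreal ((Y y)\<^sup>2 + s2) \<partial>P) = ennreal (\<integral>y. (Y y)\<^sup>2 + s2 \<partial>P)"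
      using iY2 s2 Bochner_Integration.integrable_add[OF iY2 finite_measure.integrable_const[of P s2]] P
      by (intro nn_integral_eq_integral) (auto simp: prob_space_def)
    also have "(\<integral>y. (Y y)\<^sup>2 + s2 \<partial>P) = (\<integral>y. (Y y)\<^sup>2 \<partial>P) + s2"
      using iY2 by (simp add: prob_space)
    also have "ennreal (\<dots>) \<le> ennreal (2 * s2)" using v by (intro ennreal_leI) simp
    finally show ?thesis .
  qed
  have "(\<integral>\<^sup>+X. ennreal (\<Sum>i<N. ((Y (X i))\<^sup>2 + s2)) \<partial>?PN) = (\<integral>\<^sup>+X. (\<Sum>i<N. ennreal ((Y (X i))\<^sup>2 + s2)) \<partial>?PN)"
    using s2 by (subst sum_ennreal) auto
  also have "\<dots> = (\<Sum>i<N. (\<integral>\<^sup>+X. ennreal ((Y (X i))\<^sup>2 + s2) \<partial>?PN))"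
    by (rule nn_integral_sum) simp
  also have "\<dots> \<le> (\<Sum>i<N. ennreal (2 * s2))"
    using one by (intro sum_mono) auto
  also have "\<dots> = ennreal (real N * (2 * s2))"
    using s2 by (subst sum_ennreal) auto
  finally show ?thesis .
qed

lemma per_k:
  fixes Y :: "'a \<Rightarrow> real" and N :: nat
  assumes P: "prob_space P" and Ym[measurable]: "Y \<in> borel_measurable P"
    and iY: "integrable P Y" and iY2: "integrable P (\<lambda>x. (Y x)\<^sup>2)"
    and v: "(\<integral>x. (Y x)\<^sup>2 \<partial>P) \<le> s2" and mu: "\<mu> = (\<integral>x. Y x \<partial>P)"
    and s2: "0 < s2" and N: "1 \<le> N" and d: "0 < \<delta>" "\<delta> < 1"
  shows "measure (PiM {..<N} (\<lambda>_. P)) {X \<in> space (PiM {..<N} (\<lambda>_. P)).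
     4 * (1 + ln (1/\<delta>)) * (\<Sum>i<N. ((Y (X i))\<^sup>2 + s2)) < (\<Sum>i<N. (Y (X i) - \<mu>))\<^sup>2} \<le> 2 * \<delta>"
proof -
  let ?PN = "PiM {..<N} (\<lambda>_. P)"
  interpret PN: prob_space ?PN by (intro prob_space_PiM P)
  define G where "G = {X \<in> space ?PN.
     4 * (1 + ln (1/\<delta>)) * (\<Sum>i<N. ((Y (X i))\<^sup>2 + s2)) < (\<Sum>i<N. (Y (X i) - \<mu>))\<^sup>2}"
  have Gm: "G \<in> sets ?PN" unfolding G_def by measurable
  define c2 where "c2 = real N * s2 / 3"
  have c2: "0 < c2" using N s2 by (simp add: c2_def)
  define c where "c = sqrt c2"
  have c: "0 < c" using c2 by (simp add: c_def)
  have cc: "c\<^sup>2 = c2" using c2 by (simp add: c_def)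
  define A where "A = (\<lambda>X. (\<Sum>i<N. ((Y (X i))\<^sup>2 + s2)))"
  define S where "S = (\<lambda>X. (\<Sum>i<N. (Y (X i) - \<mu>)))"
  define W where "W = (\<lambda>X. c / sqrt (A X + c\<^sup>2) * exp ((S X)\<^sup>2 / (2 * (A X + c\<^sup>2))))"
  define a where "a = sqrt (1 + 8/\<delta>) / exp (3/2 * (1 + ln (1/\<delta>)))"
  define b where "b = (\<delta>/8) / c2"
  have a: "0 \<le> a" using d by (simp add: a_def)
  have b: "0 \<le> b" using d c2 by (simp add: b_def)
  have An: "0 \<le> A X" for X using s2 by (simp add: A_def sum_nonneg add_nonneg_nonneg)
  have Wn: "0 \<le> W X" for X unfolding W_def using c An[of X]
    by (intro mult_nonneg_nonneg divide_nonneg_nonneg) auto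
  have AN: "3 * c2 \<le> A X" for X
  proof -
    have "3 * c2 = (\<Sum>i<N. s2)" by (simp add: c2_def)
    also have "\<dots> \<le> A X" unfolding A_def by (intro sum_mono) simp
    finally show ?thesis .
  qed
  have ind: "indicator G X \<le> ennreal a * ennreal (W X) + ennreal b * ennreal (A X)" for X
  proof (cases "X \<in> G")
    case True
    then have "4 * (1 + ln (1/\<delta>)) * A X < (S X)\<^sup>2" by (simp add: G_def A_def S_def)
    from pw_real[OF c2 d AN this] have "1 \<le> a * W X + b * A X"
      using c2 by (simp add: a_def b_def W_def c_def real_sqrt_pow2 less_imp_le)
    then have "ennreal 1 \<le> ennreal (a * W X + b * A X)" by (rule ennreal_leI)
    then show ?thesis using True a b Wn An by (simp add: ennreal_mult ennreal_plus)
  qed simp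
  have "emeasure ?PN G = (\<integral>\<^sup>+X. indicator G X \<partial>?PN)"
    using Gm by simp
  also have "\<dots> \<le> (\<integral>\<^sup>+X. ennreal a * ennreal (W X) + ennreal b * ennreal (A X) \<partial>?PN)"
    by (intro nn_integral_mono ind)
  also have "\<dots> = ennreal a * (\<integral>\<^sup>+X. ennreal (W X) \<partial>?PN) + ennreal b * (\<integral>\<^sup>+X. ennreal (A X) \<partial>?PN)"
    unfolding W_def A_def S_def
    by (subst nn_integral_add) (auto simp: nn_integral_cmult)
  also have "\<dots> \<le> ennreal a * 1 + ennreal b * ennreal (real N * (2 * s2))"
  proof (intro add_mono mult_left_mono)
    show "(\<integral>\<^sup>+X. ennreal (W X) \<partial>?PN) \<le> 1"
      unfolding W_def A_def S_def by (rule mix_bound[OF P Ym iY iY2 v mu c]) (use s2 in simp)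
    show "(\<integral>\<^sup>+X. ennreal (A X) \<partial>?PN) \<le> ennreal (real N * (2 * s2))"
      unfolding A_def by (rule EA[OF P Ym iY2 v]) (use s2 in simp)
  qed auto
  also have "\<dots> = ennreal (a + 6 * (\<delta>/8))"
    using a b c2 N s2 by (simp add: ennreal_mult[symmetric] ennreal_plus[symmetric] b_def c2_def field_simps)
  also have "\<dots> \<le> ennreal (2 * \<delta>)"
    using const_real[OF d] by (intro ennreal_leI) (simp add: a_def)
  finally have "emeasure ?PN G \<le> ennreal (2 * \<delta>)" .
  then have "measure ?PN G \<le> 2 * \<delta>"
    using d by (simp add: PN.emeasure_eq_measure)
  then show ?thesis by (simp add: G_def)
qed

lemma f_facts:
  fixes f :: "'a \<Rightarrow> real"
  assumes fm[measurable]: "f \<in> borel_measurable M" and fn: "\<forall>x\<in>space M. 0 \<le> f x"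
    and P: "prob_space (density M (\<lambda>x. ennreal (f x)))"
  shows "integrable M f" "(\<integral>x. f x \<partial>M) = 1"
proof -
  have "emeasure (density M (\<lambda>x. ennreal (f x))) (space M) = 1"
    using prob_space.emeasure_space_1[OF P] by simp
  also have "emeasure (density M (\<lambda>x. ennreal (f x))) (space M) = (\<integral>\<^sup>+x. ennreal (f x) * indicator (space M) x \<partial>M)"
    by (rule emeasure_density) auto
  also have "\<dots> = (\<integral>\<^sup>+x. ennreal (f x) \<partial>M)"
    by (intro nn_integral_cong) auto
  finally have nn: "(\<integral>\<^sup>+x. ennreal (f x) \<partial>M) = 1" .
  show i: "integrable M f"
    using fn nn by (intro integrableI_nonneg) auto
  have "(\<integral>\<^sup>+x. ennreal (f x) \<partial>M) = ennreal (\<integral>x. f x \<partial>M)"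
    using fn by (intro nn_integral_eq_integral i) auto
  with nn have "ennreal (\<integral>x. f x \<partial>M) = 1" by simp
  moreover have "0 \<le> (\<integral>x. f x \<partial>M)" using fn by (auto intro!: integral_nonneg)
  ultimately show "(\<integral>x. f x \<partial>M) = 1" by simp
qed

lemma case1:
  fixes f g :: "'a \<Rightarrow> real"
  assumes [measurable]: "f \<in> borel_measurable M" "g \<in> borel_measurable M" and fn: "\<forall>x\<in>space M. 0 \<le> f x"
    and ig: "integrable M (\<lambda>x. (g x)\<^sup>2)" and fc: "\<forall>x\<in>space M. f x \<le> c"
  shows "integrable M (\<lambda>x. f x * (g x)\<^sup>2)" "(\<integral>x. f x * (g x)\<^sup>2 \<partial>M) \<le> c * (\<integral>x. (g x)\<^sup>2 \<partial>M)"
proof -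
  have ic: "integrable M (\<lambda>x. c * (g x)\<^sup>2)" using ig by simp
  have le: "f x * (g x)\<^sup>2 \<le> c * (g x)\<^sup>2" if "x \<in> space M" for x
    using fc fn that by (intro mult_right_mono) auto
  have nb: "norm (f x * (g x)\<^sup>2) \<le> norm (c * (g x)\<^sup>2)" if "x \<in> space M" for x
  proof -
    have "0 \<le> f x * (g x)\<^sup>2" using fn that by simp
    then show ?thesis using le[OF that] abs_ge_self[of "c * (g x)\<^sup>2"] by simp
  qed
  show i: "integrable M (\<lambda>x. f x * (g x)\<^sup>2)"
    using nb by (intro Bochner_Integration.integrable_bound[OF ic]) (auto intro!: AE_I2)
  have "(\<integral>x. f x * (g x)\<^sup>2 \<partial>M) \<le> (\<integral>x. c * (g x)\<^sup>2 \<partial>M)"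
    using le by (intro integral_mono i ic)
  then show "(\<integral>x. f x * (g x)\<^sup>2 \<partial>M) \<le> c * (\<integral>x. (g x)\<^sup>2 \<partial>M)" by simp
qed

lemma case2:
  fixes f g :: "'a \<Rightarrow> real"
  assumes [measurable]: "f \<in> borel_measurable M" "g \<in> borel_measurable M" and fn: "\<forall>x\<in>space M. 0 \<le> f x"
    and if1: "integrable M f" "(\<integral>x. f x \<partial>M) = 1"
    and gb: "\<forall>x\<in>space M. \<bar>g x\<bar> \<le> sqrt K" and K: "0 \<le> K"
  shows "integrable M (\<lambda>x. f x * (g x)\<^sup>2)" "(\<integral>x. f x * (g x)\<^sup>2 \<partial>M) \<le> K"
proof -
  have ic: "integrable M (\<lambda>x. K * f x)" using if1 by simp
  have g2: "(g x)\<^sup>2 \<le> K" if "x \<in> space M" for x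
  proof -
    have "\<bar>g x\<bar>\<^sup>2 \<le> (sqrt K)\<^sup>2" using gb that by (intro power_mono) auto
    then show ?thesis using K by simp
  qed
  have le: "f x * (g x)\<^sup>2 \<le> K * f x" if "x \<in> space M" for x
    using mult_left_mono[OF g2[OF that], of "f x"] fn that by (simp add: mult.commute)
  have nb: "norm (f x * (g x)\<^sup>2) \<le> norm (K * f x)" if "x \<in> space M" for x
  proof -
    have "0 \<le> f x * (g x)\<^sup>2" using fn that by simp
    then show ?thesis using le[OF that] abs_ge_self[of "K * f x"] by simp
  qed
  show i: "integrable M (\<lambda>x. f x * (g x)\<^sup>2)"
    using nb by (intro Bochner_Integration.integrable_bound[OF ic]) (auto intro!: AE_I2)
  have "(\<integral>x. f x * (g x)\<^sup>2 \<partial>M) \<le> (\<integral>x. K * f x \<partial>M)"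
    using le by (intro integral_mono i ic)
  then show "(\<integral>x. f x * (g x)\<^sup>2 \<partial>M) \<le> K" using if1 by simp
qed

lemma sq_powr: "((x::real)\<^sup>2) powr r = \<bar>x\<bar> powr (2 * r)"
proof (cases "x = 0")
  case False
  then have e: "x\<^sup>2 = \<bar>x\<bar> powr 2" using powr_realpow[of "\<bar>x\<bar>" 2] by simp
  show ?thesis unfolding e by (rule powr_powr)
qed simp

lemma powr_inv_bound:
  fixes I a r :: real
  assumes "0 \<le> I" "I powr (1/r) \<le> a" "0 < r"
  shows "I \<le> a powr r"
proof -
  have "I = (I powr (1/r)) powr r" using assms by (simp add: powr_powr)
  also have "\<dots> \<le> a powr r" using assms by (intro powr_mono2) auto
  finally show ?thesis .
qed

lemma case3:
  fixes f g :: "'a \<Rightarrow> real" and r a b :: real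
  assumes [measurable]: "f \<in> borel_measurable M" "g \<in> borel_measurable M" and fn: "\<forall>x\<in>space M. 0 \<le> f x"
    and r: "1 < r"
    and ig: "integrable M (\<lambda>x. \<bar>g x\<bar> powr (2*r))" and hg: "(\<integral>x. \<bar>g x\<bar> powr (2*r) \<partial>M) powr (1/r) \<le> a"
    and iff: "integrable M (\<lambda>x. \<bar>f x\<bar> powr (r/(r-1)))"
    and hf: "(\<integral>x. \<bar>f x\<bar> powr (r/(r-1)) \<partial>M) powr (1/(r/(r-1))) \<le> b"
    and a: "0 < a" and b: "0 < b"
  shows "integrable M (\<lambda>x. f x * (g x)\<^sup>2)" "(\<integral>x. f x * (g x)\<^sup>2 \<partial>M) \<le> a * b"
proof -
  define q where "q = r/(r-1)"
  have q: "1 < q" using r by (simp add: q_def)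
  have rq: "1/r + 1/q = 1" using r by (simp add: q_def field_simps)
  define h where "h = (\<lambda>x. a * b / (a powr r * r) * \<bar>g x\<bar> powr (2*r) + a * b / (b powr q * q) * \<bar>f x\<bar> powr q)"
  have ih: "integrable M h" unfolding h_def q_def using ig iff by simp
  have le: "f x * (g x)\<^sup>2 \<le> h x" if x: "x \<in> space M" for x
  proof -
    have fx: "0 \<le> f x" using fn x by simp
    have "f x * (g x)\<^sup>2 = a * b * (((g x)\<^sup>2 / a) * (f x / b))" using a b by simp
    also have "\<dots> \<le> a * b * (((g x)\<^sup>2 / a) powr r / r + (f x / b) powr q / q)"
      using a b fx r q rq by (intro mult_left_mono Youngs_inequality) auto
    also have "\<dots> = h x"
      using a b fx by (simp add: h_def powr_divide sq_powr field_simps)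
    finally show ?thesis .
  qed
  have nb: "norm (f x * (g x)\<^sup>2) \<le> norm (h x)" if "x \<in> space M" for x
  proof -
    have "0 \<le> f x * (g x)\<^sup>2" using fn that by simp
    then show ?thesis using le[OF that] abs_ge_self[of "h x"] by simp
  qed
  show i: "integrable M (\<lambda>x. f x * (g x)\<^sup>2)"
    using nb by (intro Bochner_Integration.integrable_bound[OF ih]) (auto intro!: AE_I2)
  have I1: "(\<integral>x. \<bar>g x\<bar> powr (2*r) \<partial>M) \<le> a powr r"
    using hg r by (intro powr_inv_bound integral_nonneg) auto
  have I2: "(\<integral>x. \<bar>f x\<bar> powr q \<partial>M) \<le> b powr q"
    using hf q unfolding q_def[symmetric] by (intro powr_inv_bound integral_nonneg) auto
  have "(\<integral>x. f x * (g x)\<^sup>2 \<partial>M) \<le> (\<integral>x. h x \<partial>M)"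
    using le by (intro integral_mono i ih)
  also have "(\<integral>x. h x \<partial>M) = a * b / (a powr r * r) * (\<integral>x. \<bar>g x\<bar> powr (2*r) \<partial>M)
      + a * b / (b powr q * q) * (\<integral>x. \<bar>f x\<bar> powr q \<partial>M)"
    unfolding h_def q_def using ig iff by simp
  also have "\<dots> \<le> a * b / (a powr r * r) * a powr r + a * b / (b powr q * q) * b powr q"
    using I1 I2 a b r q by (intro add_mono mult_left_mono) auto
  also have "\<dots> = a * b * (1/r + 1/q)"
    using a b r q by (simp add: field_simps)
  also have "\<dots> = a * b" using rq by simp
  finally show "(\<integral>x. f x * (g x)\<^sup>2 \<partial>M) \<le> a * b" .
qed

lemma moment:
  fixes f :: "'a \<Rightarrow> real" and fs :: "nat \<Rightarrow> 'a \<Rightarrow> real"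
  assumes fm[measurable]: "f \<in> borel_measurable M" and fn: "\<forall>x\<in>space M. 0 \<le> f x"
    and Pd: "prob_space (density M (\<lambda>x. ennreal (f x)))"
    and gm[measurable]: "fs k \<in> borel_measurable M" and ig: "integrable M (\<lambda>x. (fs k x)\<^sup>2)"
    and D: "sqnorm M (fs k) > 0"
    and H: "cond_H M f fs m p c cs" and k: "k \<in> {1..m}"
  shows "integrable M (\<lambda>x. f x * (fs k x)\<^sup>2)"
    "(\<integral>x. f x * (fs k x)\<^sup>2 \<partial>M) \<le> cs k * c * sqnorm M (fs k)"
proof -
  note ff = f_facts[OF fm fn Pd]
  have c: "0 < c" and ck: "0 < cs k" using H k by (auto simp: cond_H_def)
  have "integrable M (\<lambda>x. f x * (fs k x)\<^sup>2) \<and> (\<integral>x. f x * (fs k x)\<^sup>2 \<partial>M) \<le> cs k * c * sqnorm M (fs k)"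
  proof -
    consider (one) "p = 1" "\<forall>x\<in>space M. f x \<le> c" "cs k = 1"
      | (inf) "c = 1" "\<forall>x\<in>space M. \<bar>fs k x\<bar> \<le> sqrt (cs k * sqnorm M (fs k))"
      | (mid) r where "1 < r" "integrable M (\<lambda>x. \<bar>fs k x\<bar> powr (2 * r))"
          "(\<integral>x. \<bar>fs k x\<bar> powr (2 * r) \<partial>M) powr (1 / r) \<le> cs k * sqnorm M (fs k)"
          "integrable M (\<lambda>x. \<bar>f x\<bar> powr (r / (r - 1)))"
          "(\<integral>x. \<bar>f x\<bar> powr (r / (r - 1)) \<partial>M) powr (1 / (r / (r - 1))) \<le> c * (\<integral>x. \<bar>f x\<bar> \<partial>M)"
      using H k unfolding cond_H_def by blast
    then show ?thesis
    proof cases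
      case one
      then show ?thesis using case1[OF fm gm fn ig, of c] by (simp add: sqnorm_def)
    next
      case inf
      have "0 \<le> sqnorm M (fs k)" using D by simp
      then show ?thesis using case2[OF fm gm fn ff inf(2)] inf ck by simp
    next
      case mid
      have "(\<integral>x. \<bar>f x\<bar> \<partial>M) = (\<integral>x. f x \<partial>M)"
        by (rule Bochner_Integration.integral_cong[OF refl]) (use fn in auto)
      then have af: "(\<integral>x. \<bar>f x\<bar> \<partial>M) = 1" using ff by simp
      have a: "0 < cs k * sqnorm M (fs k)" using ck D by simp
      have b: "0 < c * (\<integral>x. \<bar>f x\<bar> \<partial>M)" using c af by simp
      show ?thesis using case3[OF fm gm fn mid(1-5) a b] af by (simp add: ac_simps)
    qed
  qed
  then show "integrable M (\<lambda>x. f x * (fs k x)\<^sup>2)"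
    "(\<integral>x. f x * (fs k x)\<^sup>2 \<partial>M) \<le> cs k * c * sqnorm M (fs k)" by auto
qed

lemma first_int:
  fixes f g :: "'a \<Rightarrow> real"
  assumes [measurable]: "f \<in> borel_measurable M" "g \<in> borel_measurable M"
    and "integrable M (\<lambda>x. (f x)\<^sup>2)" "integrable M (\<lambda>x. (g x)\<^sup>2)"
  shows "integrable M (\<lambda>x. f x * g x)"
proof -
  have i: "integrable M (\<lambda>x. (f x)\<^sup>2 + (g x)\<^sup>2)" using assms by simp
  have nb: "norm (f x * g x) \<le> norm ((f x)\<^sup>2 + (g x)\<^sup>2)" for x
  proof -
    have "0 \<le> (\<bar>f x\<bar> - \<bar>g x\<bar>)\<^sup>2" by simp
    then have "2 * (\<bar>f x\<bar> * \<bar>g x\<bar>) \<le> (f x)\<^sup>2 + (g x)\<^sup>2" by (simp add: power2_eq_square algebra_simps)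
    moreover have "0 \<le> \<bar>f x\<bar> * \<bar>g x\<bar>" by simp
    ultimately have "\<bar>f x\<bar> * \<bar>g x\<bar> \<le> (f x)\<^sup>2 + (g x)\<^sup>2" by linarith
    then show ?thesis by (simp add: abs_mult)
  qed
  show ?thesis using nb by (intro Bochner_Integration.integrable_bound[OF i]) auto
qed

lemma d2_eq:
  fixes g :: "'a \<Rightarrow> real"
  shows "d2 M (\<lambda>x. a * g x) (\<lambda>x. b * g x) = (a - b)\<^sup>2 * sqnorm M g"
proof -
  have "(a * g x - b * g x)\<^sup>2 = (a - b)\<^sup>2 * (g x)\<^sup>2" for x by (simp add: power2_eq_square algebra_simps)
  then show ?thesis by (simp add: d2_def sqnorm_def)
qed

lemma alg:
  fixes T Q \<mu> D n s2 L cc :: real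
  assumes D: "0 < D" and n: "0 < n" and s2: "s2 = cc * D"
  shows "(((T/n)/D - \<mu>/D)\<^sup>2 * D \<le> 4 * L / n * ((Q/n)/D + cc)) \<longleftrightarrow> (T - n*\<mu>)\<^sup>2 \<le> 4 * L * (Q + n * s2)"
proof -
  have e1: "((T/n)/D - \<mu>/D)\<^sup>2 * D = (T - n*\<mu>)\<^sup>2 / (n\<^sup>2 * D)"
    using D n by (simp add: field_simps power2_eq_square)
  have e2: "4 * L / n * ((Q/n)/D + cc) = 4 * L * (Q + n * s2) / (n\<^sup>2 * D)"
    using D n s2 by (simp add: field_simps power2_eq_square)
  have p: "0 < n\<^sup>2 * D" using D n by simp
  show ?thesis unfolding e1 e2 using p by (simp add: divide_le_cancel)
qed

theorem theorem1:
  fixes M :: "'a measure" and f :: "'a \<Rightarrow> real" and fs :: "nat \<Rightarrow> 'a \<Rightarrow> real"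
    and m N :: nat and p :: ereal and c :: real and cs :: "nat \<Rightarrow> real" and \<epsilon> :: real
  assumes "sigma_finite_measure M"
    and "f \<in> borel_measurable M" and "\<forall>x\<in>space M. 0 \<le> f x"
    and "prob_space (density M (\<lambda>x. ennreal (f x)))"
    and "integrable M (\<lambda>x. (f x)\<^sup>2)"
    and "1 \<le> m" and "1 \<le> N"
    and "\<forall>k\<in>{1..m}. fs k \<in> borel_measurable M"
    and "\<forall>k\<in>{1..m}. integrable M (\<lambda>x. (fs k x)\<^sup>2)"
    and "\<forall>k\<in>{1..m}. sqnorm M (fs k) > 0"
    and "1 \<le> p"
    and "cond_H M f fs m p c cs"
    and "\<epsilon> > 0"
  shows "measure (PiM {..<N} (\<lambda>_. density M (\<lambda>x. ennreal (f x))))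
      {X \<in> space (PiM {..<N} (\<lambda>_. density M (\<lambda>x. ennreal (f x)))).
        \<forall>k\<in>{1..m}.
          d2 M (\<lambda>x. alpha_hat M (fs k) N X * fs k x) (\<lambda>x. alpha_bar M f (fs k) * fs k x)
          \<le> 4 * (1 + ln (2 * real m / \<epsilon>)) / real N *
             (((\<Sum>i<N. (fs k (X i))\<^sup>2) / real N) / sqnorm M (fs k) + cs k * c)}
    \<ge> 1 - \<epsilon>"
proof -
  let ?P = "density M (\<lambda>x. ennreal (f x))"
  let ?PN = "PiM {..<N} (\<lambda>_. ?P)"
  note fm[measurable] = assms(2)
  note fn = assms(3) and Pd = assms(4) and f2 = assms(5) and m1 = assms(6) and N1 = assms(7)
    and fsm = assms(8) and fs2 = assms(9) and Dpos = assms(10) and H = assms(12) and eps = assms(13)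
  interpret PN: prob_space ?PN by (intro prob_space_PiM Pd)
  have c: "0 < c" using H by (simp add: cond_H_def)
  show ?thesis
  proof (cases "1 \<le> \<epsilon>")
    case True
    have "0 \<le> measure ?PN {X \<in> space ?PN. \<forall>k\<in>{1..m}.
          d2 M (\<lambda>x. alpha_hat M (fs k) N X * fs k x) (\<lambda>x. alpha_bar M f (fs k) * fs k x)
          \<le> 4 * (1 + ln (2 * real m / \<epsilon>)) / real N *
             (((\<Sum>i<N. (fs k (X i))\<^sup>2) / real N) / sqnorm M (fs k) + cs k * c)}"
      by (rule measure_nonneg)
    then show ?thesis using True by linarith
  next
    case False
    define \<delta> where "\<delta> = \<epsilon> / (2 * real m)"
    have d: "0 < \<delta>" "\<delta> < 1" using False eps m1 by (auto simp: \<delta>_def field_simps)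
    have Leq: "ln (2 * real m / \<epsilon>) = ln (1/\<delta>)" by (simp add: \<delta>_def)
    define mu where "mu k = (\<integral>x. fs k x \<partial>?P)" for k
    define s2 where "s2 k = cs k * c * sqnorm M (fs k)" for k
    define bad where "bad k = {X \<in> space ?PN. 4 * (1 + ln (1/\<delta>)) * (\<Sum>i<N. ((fs k (X i))\<^sup>2 + s2 k))
        < (\<Sum>i<N. (fs k (X i) - mu k))\<^sup>2}" for k
    have badm: "bad k \<in> sets ?PN" if k: "k \<in> {1..m}" for k
    proof -
      have [measurable]: "fs k \<in> borel_measurable M" using fsm k by simp
      show ?thesis unfolding bad_def by measurable
    qed
    have mu_eq: "mu k = (\<integral>x. fs k x * f x \<partial>M)" if k: "k \<in> {1..m}" for k
    proof -
      have [measurable]: "fs k \<in> borel_measurable M" using fsm k by simp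
      have "mu k = (\<integral>x. f x *\<^sub>R fs k x \<partial>M)" unfolding mu_def
        using fn by (intro integral_density) auto
      then show ?thesis by (simp add: mult.commute)
    qed
    have badp: "measure ?PN (bad k) \<le> 2 * \<delta>" if k: "k \<in> {1..m}" for k
    proof -
      have fk[measurable]: "fs k \<in> borel_measurable M" using fsm k by simp
      have fk2: "integrable M (\<lambda>x. (fs k x)\<^sup>2)" using fs2 k by simp
      have Dk: "0 < sqnorm M (fs k)" using Dpos k by simp
      note mom = moment[OF fm fn Pd fk fk2 Dk H k]
      have Ym: "fs k \<in> borel_measurable ?P" by simp
      have iY: "integrable ?P (fs k)"
        using first_int[OF fm fk f2 fk2] fn by (subst integrable_density) auto
      have iY2: "integrable ?P (\<lambda>x. (fs k x)\<^sup>2)"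
        using mom(1) fn by (subst integrable_density) auto
      have "(\<integral>x. (fs k x)\<^sup>2 \<partial>?P) = (\<integral>x. f x * (fs k x)\<^sup>2 \<partial>M)"
        using fn by (subst integral_density) auto
      then have v: "(\<integral>x. (fs k x)\<^sup>2 \<partial>?P) \<le> s2 k" using mom(2) by (simp add: s2_def)
      have s2p: "0 < s2 k" using H k c Dk by (simp add: s2_def cond_H_def)
      show ?thesis
        using per_k[OF Pd Ym iY iY2 v mu_def s2p N1 d] by (simp add: bad_def)
    qed
    let ?G = "{X \<in> space ?PN. \<forall>k\<in>{1..m}.
          d2 M (\<lambda>x. alpha_hat M (fs k) N X * fs k x) (\<lambda>x. alpha_bar M f (fs k) * fs k x)
          \<le> 4 * (1 + ln (2 * real m / \<epsilon>)) / real N *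
             (((\<Sum>i<N. (fs k (X i))\<^sup>2) / real N) / sqnorm M (fs k) + cs k * c)}"
    have iff: "(d2 M (\<lambda>x. alpha_hat M (fs k) N X * fs k x) (\<lambda>x. alpha_bar M f (fs k) * fs k x)
          \<le> 4 * (1 + ln (2 * real m / \<epsilon>)) / real N *
             (((\<Sum>i<N. (fs k (X i))\<^sup>2) / real N) / sqnorm M (fs k) + cs k * c)) \<longleftrightarrow> X \<notin> bad k"
      if k: "k \<in> {1..m}" and X: "X \<in> space ?PN" for k X
    proof -
      have Dk: "0 < sqnorm M (fs k)" using Dpos k by simp
      have n: "0 < real N" using N1 by simp
      have s2e: "s2 k = cs k * c * sqnorm M (fs k)" by (simp add: s2_def)
      have s1: "(\<Sum>i<N. ((fs k (X i))\<^sup>2 + s2 k)) = (\<Sum>i<N. (fs k (X i))\<^sup>2) + real N * s2 k"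
        by (simp add: sum.distrib)
      have s0: "(\<Sum>i<N. (fs k (X i) - mu k)) = (\<Sum>i<N. fs k (X i)) - real N * mu k"
        by (simp add: sum_subtractf)
      have "d2 M (\<lambda>x. alpha_hat M (fs k) N X * fs k x) (\<lambda>x. alpha_bar M f (fs k) * fs k x)
          = (((\<Sum>i<N. fs k (X i)) / real N) / sqnorm M (fs k) - mu k / sqnorm M (fs k))\<^sup>2 * sqnorm M (fs k)"
        unfolding d2_eq by (simp add: alpha_hat_def alpha_bar_def mu_eq[OF k])
      then show ?thesis
        using alg[where T="\<Sum>i<N. fs k (X i)" and Q="\<Sum>i<N. (fs k (X i))\<^sup>2" and \<mu>="mu k"
            and L="1 + ln (2 * real m / \<epsilon>)", OF Dk n s2e] X
        by (simp add: bad_def s1 s0 Leq not_less)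
    qed
    have Geq: "?G = space ?PN - (\<Union>k\<in>{1..m}. bad k)"
      using iff by auto
    have U: "(\<Union>k\<in>{1..m}. bad k) \<in> sets ?PN" using badm by auto
    have "measure ?PN (\<Union>k\<in>{1..m}. bad k) \<le> (\<Sum>k\<in>{1..m}. measure ?PN (bad k))"
      using badm by (intro measure_UNION_le) auto
    also have "\<dots> \<le> (\<Sum>k\<in>{1..m}. 2 * \<delta>)" using badp by (intro sum_mono) auto
    also have "\<dots> = \<epsilon>" using m1 by (simp add: \<delta>_def)
    finally have "measure ?PN (\<Union>k\<in>{1..m}. bad k) \<le> \<epsilon>" .
    moreover have "measure ?PN ?G = 1 - measure ?PN (\<Union>k\<in>{1..m}. bad k)"
      unfolding Geq by (rule PN.prob_compl[OF U])
    ultimately show ?thesis by linarith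
  qed
qed

end
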